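(* For any graph $F$ on $y\ge 1$ vertices and any real $\lambda>0$, \[ \frac{\lambda Z_F'(\lambda)}{Z_F(\lambda)}\ \ge\ \frac{\log Z_F(\lambda)}{K\bigl(y\lambda/\log Z_F(\lambda)\bigr)}. \]
   Context: $\log$ is the natural logarithm. For a graph $F$, $Z_F(\lambda)=\sum_{I}\lambda^{|I|}$ where the sum is over all independent sets $I$ of $F$ (including $\varnothing$), and $Z_F'$ is its derivative in $\lambda$. $W_{-1}$ denotes the lower (negative real) branch of the Lambert $W$-function, i.e. the inverse of $x\mapsto xe^x$ on $(-\infty,-1]$, defined on $[-1/e,0)$. $K:[1,\infty)\to[1,\infty)$ is $K(y)=-W_{-1}(-1/(ey))$; equivalently, for $y\ge1$, $x=1/(eyK(y))$ is the solution in $(0,1/e]$ of $x\log(1/x)=1/(ey)$. (Note $y\lambda/\log Z_F(\lambda)\ge1$ since $Z_F(\lambda)\le(1+\lambda)^y$.) *)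

theory Defs
  imports "HOL-Analysis.Analysis"
begin

definition is_graph :: "'a set \<Rightarrow> ('a \<Rightarrow> 'a \<Rightarrow> bool) \<Rightarrow> bool" where
  "is_graph V E \<longleftrightarrow> finite V \<and> (\<forall>u v. E u v \<longrightarrow> E v u) \<and> (\<forall>v. \<not> E v v)"

definition indep_set :: "'a set \<Rightarrow> ('a \<Rightarrow> 'a \<Rightarrow> bool) \<Rightarrow> 'a set \<Rightarrow> bool" where
  "indep_set V E I \<longleftrightarrow> I \<subseteq> V \<and> (\<forall>u\<in>I. \<forall>v\<in>I. \<not> E u v)"

definition indep_poly :: "'a set \<Rightarrow> ('a \<Rightarrow> 'a \<Rightarrow> bool) \<Rightarrow> real \<Rightarrow> real" where
  "indep_poly V E lam = (\<Sum>I\<in>{I. indep_set V E I}. lam ^ card I)"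

text \<open>Lower branch W_{-1} of Lambert W: inverse of x e^x on (-inf,-1], on [-1/e,0).\<close>
definition lambertW_m1 :: "real \<Rightarrow> real" where
  "lambertW_m1 z = (THE w. w \<le> -1 \<and> w * exp w = z)"

definition K_fun :: "real \<Rightarrow> real" where
  "K_fun y = - lambertW_m1 (- 1 / (exp 1 * y))"

end

theory Submission
  imports Defs
begin

lemma pow_sum:
  fixes c :: real
  assumes "finite V"
  shows "(\<Sum>X\<in>Pow V. c ^ card X) = (1 + c) ^ card V"
proof -
  have "(\<Prod>x\<in>V. c + 1) = (\<Sum>X\<in>Pow V. (\<Prod>x\<in>X. c) * (\<Prod>x\<in>V-X. 1))"
    by (rule prod_add[OF assms])
  then show ?thesis by (simp add: add.commute)
qed

lemma wexp_strict:
  fixes a b :: real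
  assumes "a < b" "b \<le> -1"
  shows "a * exp a > b * exp b"
proof -
  define d where "d = b - a"
  define u where "u = - b"
  have d: "d > 0" and u: "u \<ge> 1" using assms by (auto simp: d_def u_def)
  have "exp (d/2) * exp (d/2) \<ge> (1 + d/2) * (1 + d/2)" using d
    by (intro mult_mono) (auto intro: add_nonneg_nonneg)
  hence "exp d \<ge> (1 + d/2) * (1 + d/2)" by (simp flip: exp_add)
  moreover have "(1 + d/2) * (1 + d/2) > 1 + d" using d by (simp add: algebra_simps)
  ultimately have "exp d > 1 + d" by linarith
  hence "u * exp d > u * (1 + d)" using u by (intro mult_strict_left_mono) auto
  moreover have "u * d \<ge> 1 * d" using u d by (intro mult_right_mono) auto
  ultimately have "u * exp d > u + d" by (simp add: algebra_simps)
  hence "u * exp d * exp a > (u + d) * exp a" by simp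
  moreover have "exp d * exp a = exp b" by (simp add: d_def flip: exp_add)
  moreover have "u + d = - a" by (simp add: u_def d_def)
  ultimately have "(- b) * (exp d * exp a) > (- a) * exp a"
    unfolding u_def by (simp only: mult.assoc)
  hence "(- b) * exp b > (- a) * exp a" using \<open>exp d * exp a = exp b\<close> by simp
  thus ?thesis by simp
qed

lemma lambertW_m1_prop:
  fixes z :: real
  assumes "- 1 / exp 1 \<le> z" "z < 0"
  shows "lambertW_m1 z \<le> -1 \<and> lambertW_m1 z * exp (lambertW_m1 z) = z"
proof -
  define f where "f = (\<lambda>w::real. w * exp w)"
  define t where "t = 4 / (- z) + 1"
  have t1: "t \<ge> 1" and tpos: "t > 0" using assms by (auto simp: t_def)
  have "exp (t/2) \<ge> 1 + t/2" by (rule exp_ge_add_one_self)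
  hence e2: "exp (t/2) \<ge> t/2" by linarith
  hence "exp (t/2) * exp (t/2) \<ge> (t/2) * (t/2)" using tpos
    by (intro mult_mono) auto
  hence et: "exp t \<ge> t * t / 4" by (simp flip: exp_add)
  have "t * exp (-t) \<le> 4 / t"
  proof -
    have "t * exp (-t) = t / exp t" by (simp add: exp_minus field_simps)
    also have "\<dots> \<le> t / (t * t / 4)" using tpos et by (intro divide_left_mono) auto
    also have "\<dots> = 4 / t" using tpos by (simp add: field_simps)
    finally show ?thesis .
  qed
  also have "4 / t < - z"
  proof -
    have "(-z) * t = 4 + (-z)" using assms by (simp add: t_def field_simps)
    hence "4 < (-z) * t" using assms by simp
    thus ?thesis using tpos by (simp add: field_simps)
  qed
  hence "4 / t < - z" by simp
  finally have ft: "f (-t) \<ge> z" by (simp add: f_def)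
  have "f (-1) = - 1 / exp 1" by (simp add: f_def exp_minus field_simps)
  hence "f (-1) \<le> z" using assms by simp
  have "\<exists>x. -t \<le> x \<and> x \<le> -1 \<and> f x = z"
    by (rule IVT2) (use ft \<open>f (-1) \<le> z\<close> t1 in \<open>auto simp: f_def intro!: continuous_intros\<close>)
  then obtain w where w: "w \<le> -1" "w * exp w = z" by (auto simp: f_def)
  have "\<exists>!w. w \<le> -1 \<and> w * exp w = z"
  proof (rule ex1I[of _ w])
    fix v assume v: "v \<le> -1 \<and> v * exp v = z"
    show "v = w"
    proof (rule ccontr)
      assume "v \<noteq> w"
      then consider "v < w" | "w < v" by linarith
      thus False using wexp_strict[of v w] wexp_strict[of w v] v w by cases auto
    qed
  qed (use w in auto)
  from theI'[OF this] show ?thesis unfolding lambertW_m1_def .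
qed

lemma one_plus_lt_exp:
  fixes d :: real assumes d: "d > 0" shows "1 + d < exp d"
proof -
  have "exp (d/2) * exp (d/2) \<ge> (1 + d/2) * (1 + d/2)" using d
    by (intro mult_mono) (auto intro: add_nonneg_nonneg)
  hence "exp d \<ge> (1 + d/2) * (1 + d/2)" by (simp flip: exp_add)
  moreover have "(1 + d/2) * (1 + d/2) > 1 + d" using d by (simp add: algebra_simps)
  ultimately show "exp d > 1 + d" by linarith
qed

theorem mainTheorem4:
  fixes V :: "'a set" and E :: "'a \<Rightarrow> 'a \<Rightarrow> bool" and lam :: real
  assumes "is_graph V E" and "card V \<ge> 1" and "lam > 0"
  shows "lam * deriv (indep_poly V E) lam / indep_poly V E lam
           \<ge> ln (indep_poly V E lam)
             / K_fun (real (card V) * lam / ln (indep_poly V E lam))"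
proof -
  have finV: "finite V" using assms(1) unfolding is_graph_def by auto
  define S where "S = {I. indep_set V E I}"
  have SP: "S \<subseteq> Pow V" unfolding S_def indep_set_def by auto
  have finS: "finite S" using SP finV by (auto intro: finite_subset)
  have ZS: "\<And>c. indep_poly V E c = (\<Sum>I\<in>S. c ^ card I)" unfolding indep_poly_def S_def by simp
  define Z where "Z = indep_poly V E lam"
  define L where "L = ln Z"
  define y where "y = real (card V)"
  define M where "M = (\<Sum>I\<in>S. real (card I) * lam ^ card I)"
  have y1: "y \<ge> 1" using assms(2) by (simp add: y_def)
  have "(indep_poly V E has_real_derivative (\<Sum>I\<in>S. real (card I) * lam ^ (card I - 1))) (at lam)"
    unfolding ZS[abs_def] by (intro DERIV_sum) (metis DERIV_pow One_nat_def)
  hence dv: "deriv (indep_poly V E) lam = (\<Sum>I\<in>S. real (card I) * lam ^ (card I - 1))"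
    by (rule DERIV_imp_deriv)
  have "lam * deriv (indep_poly V E) lam = M"
    unfolding dv M_def sum_distrib_left
  proof (rule sum.cong)
    fix I assume "I \<in> S"
    show "lam * (real (card I) * lam ^ (card I - 1)) = real (card I) * lam ^ card I"
      by (cases "card I") auto
  qed simp
  hence LHS: "lam * deriv (indep_poly V E) lam / indep_poly V E lam = M / Z" by (simp add: Z_def)
  obtain v where v: "v \<in> V" using assms(2) by (metis card.empty ex_in_conv not_one_le_zero)
  have sub: "{{}, {v}} \<subseteq> S"
    using v assms(1) unfolding S_def indep_set_def is_graph_def by auto
  have "(\<Sum>I\<in>{{}, {v}}. lam ^ card I) \<le> (\<Sum>I\<in>S. lam ^ card I)"
    by (rule sum_mono2[OF finS sub]) (use assms(3) in auto)
  hence Zge: "Z \<ge> 1 + lam" by (simp add: Z_def ZS)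
  hence Z1: "Z > 1" using assms(3) by simp
  have Lpos: "L > 0" using Z1 by (simp add: L_def)
  have Zc: "(\<Sum>I\<in>S. c ^ card I) \<le> (1 + c) ^ card V" if "c \<ge> 0" for c :: real
  proof -
    have "(\<Sum>I\<in>S. c ^ card I) \<le> (\<Sum>I\<in>Pow V. c ^ card I)"
      by (rule sum_mono2) (use finV SP that in auto)
    thus ?thesis using pow_sum[OF finV] by simp
  qed
  have "ln Z \<le> ln ((1 + lam) ^ card V)"
    using Zc[of lam] assms(3) Z1 by (simp add: Z_def ZS)
  also have "\<dots> = y * ln (1 + lam)" by (simp add: ln_realpow y_def)
  also have "\<dots> < y * lam"
  proof -
    have "ln (1 + lam) < ln (exp lam)" using one_plus_lt_exp[OF assms(3)] assms(3)
      by (subst ln_less_cancel_iff) auto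
    thus ?thesis using y1 by simp
  qed
  finally have Lylam: "L < y * lam" by (simp add: L_def)
  \<comment> \<open>Gibbs\<close>
  have gibbs: "Z * L \<le> M * (ln lam - ln c) + Z * (y * ln (1 + c))" if c: "c > 0" for c :: real
  proof -
    define P where "P = (1 + c) ^ card V"
    have Ppos: "P > 0" using c by (simp add: P_def)
    have trm: "lam ^ card I * (real (card I) * (ln c - ln lam) + (L - y * ln (1 + c)))
        \<le> c ^ card I * Z / P - lam ^ card I" if "I \<in> S" for I
    proof -
      define t where "t = (c / lam) ^ card I * Z / P"
      have tpos: "t > 0" using c assms(3) Z1 Ppos by (simp add: t_def)
      have lnt: "ln t = real (card I) * (ln c - ln lam) + (L - y * ln (1 + c))"
        using c assms(3) Z1 Ppos
        by (simp add: t_def ln_div ln_mult ln_realpow L_def P_def y_def)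
      have "lam ^ card I * ln t \<le> lam ^ card I * (t - 1)"
        using ln_le_minus_one[OF tpos] assms(3) by (intro mult_left_mono) auto
      also have "lam ^ card I * (t - 1) = c ^ card I * Z / P - lam ^ card I"
        using assms(3) by (simp add: t_def power_divide field_simps)
      finally show ?thesis by (simp add: lnt)
    qed
    have "(\<Sum>I\<in>S. lam ^ card I * (real (card I) * (ln c - ln lam) + (L - y * ln (1 + c))))
        \<le> (\<Sum>I\<in>S. c ^ card I * Z / P - lam ^ card I)"
      by (rule sum_mono) (rule trm)
    moreover have "(\<Sum>I\<in>S. lam ^ card I * (real (card I) * (ln c - ln lam) + (L - y * ln (1 + c))))
        = M * (ln c - ln lam) + Z * (L - y * ln (1 + c))"
    proof -
      have "(\<Sum>I\<in>S. lam ^ card I * (real (card I) * (ln c - ln lam) + (L - y * ln (1 + c))))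
         = (\<Sum>I\<in>S. real (card I) * lam ^ card I * (ln c - ln lam) + lam ^ card I * (L - y * ln (1 + c)))"
        by (rule sum.cong) (auto simp: algebra_simps)
      also have "\<dots> = M * (ln c - ln lam) + Z * (L - y * ln (1 + c))"
        unfolding sum.distrib M_def Z_def ZS sum_distrib_right ..
      finally show ?thesis .
    qed
    moreover have "(\<Sum>I\<in>S. c ^ card I * Z / P - lam ^ card I)
        = (\<Sum>I\<in>S. c ^ card I) * Z / P - Z"
      by (simp add: sum_subtractf sum_divide_distrib sum_distrib_right Z_def ZS)
    moreover have "(\<Sum>I\<in>S. c ^ card I) * Z / P \<le> Z"
    proof -
      have "(\<Sum>I\<in>S. c ^ card I) * Z \<le> P * Z"
        using Zc[of c] c Z1 by (intro mult_right_mono) (auto simp: P_def)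
      thus ?thesis using Ppos by (simp add: divide_le_eq mult.commute)
    qed
    ultimately show ?thesis by (simp add: algebra_simps)
  qed
  define Y where "Y = y * lam / L"
  have Y1: "Y > 1" using Lylam Lpos by (simp add: Y_def field_simps)
  define z where "z = - 1 / (exp 1 * Y)"
  have z1: "- 1 / exp 1 \<le> z" using Y1 by (simp add: z_def field_simps)
  have z0: "z < 0" using Y1 by (simp add: z_def field_simps)
  define K where "K = K_fun Y"
  have Kw: "K = - lambertW_m1 z" by (simp add: K_def K_fun_def z_def)
  from lambertW_m1_prop[OF z1 z0] have K1: "K \<ge> 1" and Ke: "(-K) * exp (-K) = z"
    by (auto simp: Kw)
  have KeL: "K * y * lam / L = exp (K - 1)"
  proof -
    have "K * exp (-K) = L / (exp 1 * y * lam)" using Ke Lpos y1 assms(3)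
      by (simp add: z_def Y_def field_simps)
    hence "K * exp (-K) * exp K = L / (exp 1 * y * lam) * exp K" by simp
    moreover have "K * exp (-K) * exp K = K" by (simp add: mult.assoc flip: exp_add)
    ultimately have "K = L * exp K / (exp 1 * y * lam)" by simp
    thus ?thesis using Lpos y1 assms(3)
      by (simp add: field_simps exp_diff)
  qed
  have Kg1: "K > 1"
  proof (rule ccontr)
    assume "\<not> K > 1" hence "K = 1" using K1 by simp
    with KeL y1 assms(3) have "y * lam / L = 1" by simp
    thus False using Lylam Lpos by (simp add: field_simps)
  qed
  define c where "c = L / (y * K)"
  have cpos: "c > 0" using Lpos y1 K1 by (simp add: c_def)
  have "ln lam - ln c = ln (lam / c)" using cpos assms(3) by (simp add: ln_div)
  also have "lam / c = K * y * lam / L" by (simp add: c_def)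
  also have "ln \<dots> = K - 1" using KeL by simp
  finally have lnc: "ln lam - ln c = K - 1" .
  have "Z * L \<le> M * (K - 1) + Z * (y * ln (1 + c))" using gibbs[OF cpos] lnc by simp
  also have "\<dots> \<le> M * (K - 1) + Z * (y * c)"
    using ln_add_one_self_le_self[of c] cpos Z1 y1 by (intro add_left_mono mult_left_mono) auto
  also have "Z * (y * c) = Z * L / K" using y1 K1 by (simp add: c_def)
  finally have "Z * L * (K - 1) / K \<le> M * (K - 1)" using K1 by (simp add: field_simps)
  hence "(K - 1) * (Z * L - K * M) \<le> 0" using Kg1 by (simp add: field_simps algebra_simps)
  hence "Z * L - K * M \<le> 0" using Kg1 by (simp add: mult_le_0_iff)
  hence "Z * L / K \<le> M" using Kg1 by (simp add: field_simps)
  hence "L / K \<le> M / Z" using Z1 by (simp add: field_simps)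
  thus ?thesis unfolding LHS by (simp add: K_def Y_def y_def L_def Z_def)
qed

end
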